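(* The left Kan extension $\mathrm{Lan}_{\blacktriangle} \colon \widehat{\Delta} \to \widehat{\overline{\square}}_\vee$ preserves monomorphisms.
   Context: $\mathbf{SLat}$ is the category of (join-)semilattices (sets with an associative, commutative, idempotent binary operation $\vee$) and $\vee$-preserving maps. $\overline{\square}_\vee$ is the full subcategory of $\mathbf{SLat}$ on finite inhabited semilattices whose induced order ($x\le y\iff x\vee y=y$) is a distributive lattice. $\Delta$ is the simplex category of finite nonempty linear orders $[n]$ and monotone maps, and $\blacktriangle\colon \Delta\hookrightarrow\overline{\square}_\vee$ regards $[n]$ as a semilattice with $\vee=\max$. $\widehat{\mathcal C}$ denotes the category of presheaves on $\mathcal C$, and $\mathrm{Lan}_\blacktriangle$ is the left adjoint of restriction along $\blacktriangle$. *)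

theory Defs
  imports "HOL-Library.FuncSet"
begin

text \<open>Object [n] is {..n}; a morphism [m] -> [n] is a monotone map, represented
  extensionally (undefined outside {..m}).\<close>

definition delta_hom :: "nat \<Rightarrow> nat \<Rightarrow> (nat \<Rightarrow> nat) \<Rightarrow> bool" where
  "delta_hom m n f \<longleftrightarrow> f \<in> extensional {..m} \<and> (\<forall>i\<le>m. f i \<le> n)
     \<and> (\<forall>i j. i \<le> j \<and> j \<le> m \<longrightarrow> f i \<le> f j)"

definition delta_presheaf ::
  "(nat \<Rightarrow> 'a set) \<Rightarrow> (nat \<Rightarrow> nat \<Rightarrow> (nat \<Rightarrow> nat) \<Rightarrow> 'a \<Rightarrow> 'a) \<Rightarrow> bool" where
  "delta_presheaf X Xm \<longleftrightarrow>
     (\<forall>m n f. delta_hom m n f \<longrightarrow> (\<forall>x\<in>X n. Xm m n f x \<in> X m))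
   \<and> (\<forall>n. \<forall>x\<in>X n. Xm n n (\<lambda>i\<in>{..n}. i) x = x)
   \<and> (\<forall>m n p f g. delta_hom m n f \<longrightarrow> delta_hom n p g \<longrightarrow>
        (\<forall>x\<in>X p. Xm m p (compose {..m} g f) x = Xm m n f (Xm n p g x)))"

definition delta_nat_trans ::
  "(nat \<Rightarrow> 'a set) \<Rightarrow> (nat \<Rightarrow> nat \<Rightarrow> (nat \<Rightarrow> nat) \<Rightarrow> 'a \<Rightarrow> 'a) \<Rightarrow>
   (nat \<Rightarrow> 'b set) \<Rightarrow> (nat \<Rightarrow> nat \<Rightarrow> (nat \<Rightarrow> nat) \<Rightarrow> 'b \<Rightarrow> 'b) \<Rightarrow>
   (nat \<Rightarrow> 'a \<Rightarrow> 'b) \<Rightarrow> bool" where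
  "delta_nat_trans X Xm Y Ym \<phi> \<longleftrightarrow>
     (\<forall>n. \<forall>x\<in>X n. \<phi> n x \<in> Y n)
   \<and> (\<forall>m n f. delta_hom m n f \<longrightarrow> (\<forall>x\<in>X n. \<phi> m (Xm m n f x) = Ym m n f (\<phi> n x)))"

text \<open>Monomorphisms in a presheaf category are exactly the componentwise injective
  natural transformations.\<close>

definition delta_mono ::
  "(nat \<Rightarrow> 'a set) \<Rightarrow> (nat \<Rightarrow> nat \<Rightarrow> (nat \<Rightarrow> nat) \<Rightarrow> 'a \<Rightarrow> 'a) \<Rightarrow>
   (nat \<Rightarrow> 'b set) \<Rightarrow> (nat \<Rightarrow> nat \<Rightarrow> (nat \<Rightarrow> nat) \<Rightarrow> 'b \<Rightarrow> 'b) \<Rightarrow>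
   (nat \<Rightarrow> 'a \<Rightarrow> 'b) \<Rightarrow> bool" where
  "delta_mono X Xm Y Ym \<phi> \<longleftrightarrow> delta_nat_trans X Xm Y Ym \<phi> \<and> (\<forall>n. inj_on (\<phi> n) (X n))"

definition sl_le :: "('c \<Rightarrow> 'c \<Rightarrow> 'c) \<Rightarrow> 'c \<Rightarrow> 'c \<Rightarrow> bool" where
  "sl_le j x y \<longleftrightarrow> j x y = y"

definition semilattice_on :: "'c set \<Rightarrow> ('c \<Rightarrow> 'c \<Rightarrow> 'c) \<Rightarrow> bool" where
  "semilattice_on S j \<longleftrightarrow>
     (\<forall>x\<in>S. \<forall>y\<in>S. j x y \<in> S)
   \<and> (\<forall>x\<in>S. \<forall>y\<in>S. \<forall>z\<in>S. j (j x y) z = j x (j y z))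
   \<and> (\<forall>x\<in>S. \<forall>y\<in>S. j x y = j y x)
   \<and> (\<forall>x\<in>S. j x x = x)"

definition is_glb_in :: "'c set \<Rightarrow> ('c \<Rightarrow> 'c \<Rightarrow> 'c) \<Rightarrow> 'c \<Rightarrow> 'c \<Rightarrow> 'c \<Rightarrow> bool" where
  "is_glb_in S j x y m \<longleftrightarrow> m \<in> S \<and> sl_le j m x \<and> sl_le j m y
     \<and> (\<forall>z\<in>S. sl_le j z x \<and> sl_le j z y \<longrightarrow> sl_le j z m)"

definition meet_in :: "'c set \<Rightarrow> ('c \<Rightarrow> 'c \<Rightarrow> 'c) \<Rightarrow> 'c \<Rightarrow> 'c \<Rightarrow> 'c" where
  "meet_in S j x y = (THE m. is_glb_in S j x y m)"

definition fin_distrib_slat :: "'c set \<Rightarrow> ('c \<Rightarrow> 'c \<Rightarrow> 'c) \<Rightarrow> bool" where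
  "fin_distrib_slat S j \<longleftrightarrow> finite S \<and> S \<noteq> {} \<and> semilattice_on S j
   \<and> (\<forall>x\<in>S. \<forall>y\<in>S. \<exists>m. is_glb_in S j x y m)
   \<and> (\<forall>x\<in>S. \<forall>y\<in>S. \<forall>z\<in>S.
        meet_in S j x (j y z) = j (meet_in S j x y) (meet_in S j x z))"

definition slat_hom_to_ord :: "'c set \<Rightarrow> ('c \<Rightarrow> 'c \<Rightarrow> 'c) \<Rightarrow> nat \<Rightarrow> ('c \<Rightarrow> nat) \<Rightarrow> bool" where
  "slat_hom_to_ord S j n h \<longleftrightarrow> h \<in> extensional S \<and> (\<forall>x\<in>S. h x \<le> n)
     \<and> (\<forall>x\<in>S. \<forall>y\<in>S. h (j x y) = max (h x) (h y))"

text \<open>(Lan X)(L) is the coend of Hom(L, [n]) x X n: the set of triples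
  (n, h, x) with h : L -> [n] and x in X n, modulo the equivalence relation
  generated by (n, alpha o h, x) ~ (m, h, X(alpha) x) for h : L -> [m],
  alpha : [m] -> [n], x in X n.\<close>

definition lan_elems :: "'c set \<Rightarrow> ('c \<Rightarrow> 'c \<Rightarrow> 'c) \<Rightarrow> (nat \<Rightarrow> 'a set)
   \<Rightarrow> (nat \<times> ('c \<Rightarrow> nat) \<times> 'a) set" where
  "lan_elems S j X = {(n, h, x). slat_hom_to_ord S j n h \<and> x \<in> X n}"

definition lan_gen :: "'c set \<Rightarrow> ('c \<Rightarrow> 'c \<Rightarrow> 'c) \<Rightarrow> (nat \<Rightarrow> 'a set)
   \<Rightarrow> (nat \<Rightarrow> nat \<Rightarrow> (nat \<Rightarrow> nat) \<Rightarrow> 'a \<Rightarrow> 'a)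
   \<Rightarrow> nat \<times> ('c \<Rightarrow> nat) \<times> 'a \<Rightarrow> nat \<times> ('c \<Rightarrow> nat) \<times> 'a \<Rightarrow> bool" where
  "lan_gen S j X Xm p q \<longleftrightarrow> (\<exists>m n h \<alpha> x. slat_hom_to_ord S j m h \<and> delta_hom m n \<alpha>
     \<and> x \<in> X n \<and> p = (n, compose S \<alpha> h, x) \<and> q = (m, h, Xm m n \<alpha> x))"

definition lan_equiv :: "'c set \<Rightarrow> ('c \<Rightarrow> 'c \<Rightarrow> 'c) \<Rightarrow> (nat \<Rightarrow> 'a set)
   \<Rightarrow> (nat \<Rightarrow> nat \<Rightarrow> (nat \<Rightarrow> nat) \<Rightarrow> 'a \<Rightarrow> 'a)
   \<Rightarrow> nat \<times> ('c \<Rightarrow> nat) \<times> 'a \<Rightarrow> nat \<times> ('c \<Rightarrow> nat) \<times> 'a \<Rightarrow> bool" where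
  "lan_equiv S j X Xm = (sup (lan_gen S j X Xm) (lan_gen S j X Xm)\<inverse>\<inverse>)\<^sup>*\<^sup>*"

text \<open>The component at L of Lan(phi) sends [(n,h,x)] to [(n,h,phi n x)];
  it is injective iff the following holds.\<close>

definition lan_component_inj :: "'c set \<Rightarrow> ('c \<Rightarrow> 'c \<Rightarrow> 'c)
   \<Rightarrow> (nat \<Rightarrow> 'a set) \<Rightarrow> (nat \<Rightarrow> nat \<Rightarrow> (nat \<Rightarrow> nat) \<Rightarrow> 'a \<Rightarrow> 'a)
   \<Rightarrow> (nat \<Rightarrow> 'b set) \<Rightarrow> (nat \<Rightarrow> nat \<Rightarrow> (nat \<Rightarrow> nat) \<Rightarrow> 'b \<Rightarrow> 'b)
   \<Rightarrow> (nat \<Rightarrow> 'a \<Rightarrow> 'b) \<Rightarrow> bool" where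
  "lan_component_inj S j X Xm Y Ym \<phi> \<longleftrightarrow>
     (\<forall>(n, h, x)\<in>lan_elems S j X. \<forall>(n', h', x')\<in>lan_elems S j X.
        lan_equiv S j Y Ym (n, h, \<phi> n x) (n', h', \<phi> n' x')
        \<longrightarrow> lan_equiv S j X Xm (n, h, x) (n', h', x'))"

end

theory Submission
  imports Defs
begin

lemma img_fact:
  fixes h :: "'c \<Rightarrow> nat"
  assumes fin: "finite A" and ne: "A \<noteq> {}"
  shows "\<exists>k::nat. \<exists>e m. e \<in> extensional A \<and> e ` A = {..k} \<and> m \<in> extensional {..k}
     \<and> (\<forall>i\<le>k. \<forall>i'\<le>k. i < i' \<longrightarrow> m i < m i') \<and> (\<forall>a\<in>A. m (e a) = h a)
     \<and> m ` {..k} = h ` A"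
proof -
  define xs where "xs = sorted_list_of_set (h ` A)"
  have fin2: "finite (h ` A)" using fin by simp
  have sx: "set xs = h ` A" using fin2 xs_def by simp
  have ds: "distinct xs" using xs_def by simp
  have ss: "sorted_wrt (<) xs" using xs_def by (simp add: strict_sorted_list_of_set)
  have "xs \<noteq> []" using sx ne by auto
  then have lp: "length xs > 0" by simp
  define k where "k = length xs - 1"
  have kk: "{..k} = {..<length xs}"
  proof (intro set_eqI iffI)
    fix x assume "x \<in> {..k}" then have "x \<le> length xs - 1" unfolding k_def by simp
    then have "x < length xs" using lp by linarith then show "x \<in> {..<length xs}" by simp
  next
    fix x assume "x \<in> {..<length xs}" then show "x \<in> {..k}" unfolding k_def by simp
  qed
  define m where "m = restrict ((!) xs) {..k}"
  have bij: "bij_betw ((!) xs) {..k} (h ` A)" using bij_betw_nth[OF ds] kk sx by simp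
  have "bij_betw m {..k} (h ` A) = bij_betw ((!) xs) {..k} (h ` A)"
    by (rule bij_betw_cong) (simp add: m_def)
  then have bijm: "bij_betw m {..k} (h ` A)" using bij by simp
  have injm: "inj_on m {..k}" using bijm unfolding bij_betw_def by simp
  have imm: "m ` {..k} = h ` A" using bijm unfolding bij_betw_def by simp
  define e where "e = restrict (\<lambda>a. the_inv_into {..k} m (h a)) A"
  have ee: "e \<in> extensional A" unfolding e_def by simp
  have me: "m \<in> extensional {..k}" unfolding m_def by simp
  have eA: "e ` A = {..k}"
  proof -
    have "e ` A = the_inv_into {..k} m ` (h ` A)" unfolding e_def by auto
    also have "\<dots> = {..k}" using bij_betw_the_inv_into[OF bijm] unfolding bij_betw_def by simp
    finally show ?thesis .
  qed
  have c: "\<forall>a\<in>A. m (e a) = h a" unfolding e_def using f_the_inv_into_f[OF injm] imm by auto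
  have st: "\<forall>i\<le>k. \<forall>i'\<le>k. i < i' \<longrightarrow> m i < m i'"
    using sorted_wrt_nth_less[OF ss] kk unfolding m_def by auto
  show ?thesis
    apply (rule exI[where x=k])
    apply (rule exI[where x=e])
    apply (rule exI[where x=m])
    apply (intro conjI)
    apply (fact ee)
    apply (fact eA)
    apply (fact me)
    apply (fact st)
    apply (fact c)
    by (fact imm)
qed
lemma dh_ext:
  assumes "delta_hom m n f" "delta_hom m n' g" "\<forall>i\<le>m. f i = g i"
  shows "f = g"
proof -
  have "f \<in> extensional {..m}" "g \<in> extensional {..m}" using assms unfolding delta_hom_def by auto
  then show ?thesis using assms(3) by (intro extensionalityI) auto
qed

lemma dh_comp:
  assumes "delta_hom m n f" "delta_hom n p g"
  shows "delta_hom m p (compose {..m} g f)"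
  using assms unfolding delta_hom_def compose_def by auto

lemma dh_id: "delta_hom n n (\<lambda>i\<in>{..n}. i)"
  unfolding delta_hom_def by auto

lemma dh_strict:
  assumes "delta_hom k n m" "inj_on m {..k}" "i < i'" "i' \<le> k"
  shows "m i < m i'"
proof -
  have "m i \<le> m i'" using assms unfolding delta_hom_def by auto
  moreover have "m i \<noteq> m i'" using assms(2-4) unfolding inj_on_def by auto
  ultimately show ?thesis by simp
qed

lemma sh_comp:
  assumes "slat_hom_to_ord S j m h" "delta_hom m n \<alpha>" "\<forall>x\<in>S. \<forall>y\<in>S. j x y \<in> S"
  shows "slat_hom_to_ord S j n (compose S \<alpha> h)"
proof -
  have "\<forall>x\<in>S. \<forall>y\<in>S. \<alpha> (max (h x) (h y)) = max (\<alpha> (h x)) (\<alpha> (h y))"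
  proof (intro ballI)
    fix x y assume "x \<in> S" "y \<in> S"
    then have "h x \<le> m" "h y \<le> m" using assms(1) unfolding slat_hom_to_ord_def by auto
    moreover have mo: "\<forall>i j. i \<le> j \<and> j \<le> m \<longrightarrow> \<alpha> i \<le> \<alpha> j" using assms(2) unfolding delta_hom_def by auto
    ultimately show "\<alpha> (max (h x) (h y)) = max (\<alpha> (h x)) (\<alpha> (h y))"
    proof (cases "h x \<le> h y")
      case True
      then have "\<alpha> (h x) \<le> \<alpha> (h y)" using mo \<open>h y \<le> m\<close> by blast
      then show ?thesis using True by (simp add: max_def)
    next
      case False
      then have "\<alpha> (h y) \<le> \<alpha> (h x)" using mo \<open>h x \<le> m\<close> by auto
      then show ?thesis using False by (simp add: max_def)
    qed
  qed
  then show ?thesis using assms unfolding slat_hom_to_ord_def delta_hom_def compose_def by auto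
qed

lemma section_ex:
  assumes "delta_hom n p \<sigma>" "\<sigma> ` {..n} = {..p}" "i \<le> n"
  shows "\<exists>\<delta>. delta_hom p n \<delta> \<and> (\<forall>l\<le>p. \<sigma> (\<delta> l) = l) \<and> \<delta> (\<sigma> i) = i"
proof -
  define \<delta> where "\<delta> = (\<lambda>l\<in>{..p}. if l = \<sigma> i then i else (SOME t. t \<le> n \<and> \<sigma> t = l))"
  have pr: "\<delta> l \<le> n \<and> \<sigma> (\<delta> l) = l" if "l \<le> p" for l
  proof (cases "l = \<sigma> i")
    case True then show ?thesis using that assms(3) unfolding \<delta>_def by auto
  next
    case False
    have "\<exists>t. t \<le> n \<and> \<sigma> t = l" using assms(2) that by (metis atMost_iff imageE)
    then have "(SOME t. t \<le> n \<and> \<sigma> t = l) \<le> n \<and> \<sigma> (SOME t. t \<le> n \<and> \<sigma> t = l) = l"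
      by (rule someI_ex)
    then show ?thesis using False that unfolding \<delta>_def by auto
  qed
  have si: "\<sigma> i \<le> p" using assms by auto
  have mono: "\<delta> l \<le> \<delta> l'" if "l \<le> l'" "l' \<le> p" for l l'
  proof (rule ccontr)
    assume "\<not> \<delta> l \<le> \<delta> l'"
    then have "\<delta> l' \<le> \<delta> l" by simp
    moreover have "\<delta> l \<le> n" using pr that by auto
    moreover have "\<forall>i j. i \<le> j \<and> j \<le> n \<longrightarrow> \<sigma> i \<le> \<sigma> j" using assms(1) unfolding delta_hom_def by auto
    ultimately have "\<sigma> (\<delta> l') \<le> \<sigma> (\<delta> l)" by blast
    then have "l' \<le> l" using pr that by auto
    then have "l = l'" using that by simp
    then show False using \<open>\<not> \<delta> l \<le> \<delta> l'\<close> by simp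
  qed
  have "delta_hom p n \<delta>" unfolding delta_hom_def using pr mono by (auto simp: \<delta>_def)
  moreover have "\<delta> (\<sigma> i) = i" using si unfolding \<delta>_def by auto
  ultimately show ?thesis using pr by blast
qed

lemma inj_self_id:
  assumes "delta_hom p p f" "inj_on f {..p}"
  shows "\<forall>i\<le>p. f i = i"
proof -
  have st: "f i < f i'" if "i < i'" "i' \<le> p" for i i' using dh_strict[OF assms that] .
  have lo: "i \<le> p \<longrightarrow> i \<le> f i" for i
  proof (induction i)
    case (Suc i) then show ?case using st[of i "Suc i"] by auto
  qed simp
  have hi: "d \<le> p \<longrightarrow> f (p - d) \<le> p - d" for d
  proof (induction d)
    case 0 then show ?case using assms(1) unfolding delta_hom_def by auto
  next
    case (Suc d)
    show ?case
    proof
      assume "Suc d \<le> p"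
      then have "f (p - Suc d) < f (p - d)" using st[of "p - Suc d" "p - d"] by auto
      then show "f (p - Suc d) \<le> p - Suc d" using Suc \<open>Suc d \<le> p\<close> by auto
    qed
  qed
  show ?thesis
  proof (intro allI impI)
    fix i assume "i \<le> p"
    then have "f (p - (p - i)) \<le> p - (p - i)" using hi[of "p - i"] by auto
    then show "f i = i" using lo[of i] \<open>i \<le> p\<close> by auto
  qed
qed

lemma surj_self_id:
  assumes "delta_hom p p f" "f ` {..p} = {..p}"
  shows "\<forall>i\<le>p. f i = i"
proof -
  have "inj_on f {..p}" using assms(2) by (intro eq_card_imp_inj_on) auto
  then show ?thesis using inj_self_id assms(1) by blast
qed

lemma delta_fact:
  assumes "delta_hom p p' f"
  shows "\<exists>q \<tau> \<mu>. delta_hom p q \<tau> \<and> \<tau> ` {..p} = {..q} \<and> delta_hom q p' \<mu> \<and> inj_on \<mu> {..q}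
     \<and> (\<forall>i\<le>p. f i = \<mu> (\<tau> i))"
proof -
  obtain k :: nat and e m where e: "e \<in> extensional {..p}" "e ` {..p} = {..k}" and m: "m \<in> extensional {..k}"
    and st: "\<forall>i\<le>k. \<forall>i'\<le>k. i < i' \<longrightarrow> m i < m i'" and c: "\<forall>a\<in>{..p}. m (e a) = f a"
    and im: "m ` {..k} = f ` {..p}"
    using img_fact[of "{..p}" f] by auto
  have ek: "i \<le> p \<Longrightarrow> e i \<le> k" for i using e(2) by auto
  have "delta_hom p k e"
    unfolding delta_hom_def
  proof (intro conjI allI impI)
    show "e \<in> extensional {..p}" by fact
    show "e i \<le> k" if "i \<le> p" for i using ek that .
    fix i i' assume a: "i \<le> i' \<and> i' \<le> p"
    show "e i \<le> e i'"
    proof (rule ccontr)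
      assume "\<not> e i \<le> e i'"
      then have "m (e i') < m (e i)" using st ek a by auto
      moreover have "f i \<le> f i'" using assms a unfolding delta_hom_def by auto
      ultimately show False using c a by auto
    qed
  qed
  moreover have "delta_hom k p' m"
    unfolding delta_hom_def
  proof (intro conjI allI impI)
    show "m \<in> extensional {..k}" by fact
    fix i assume "i \<le> k"
    then have "m i \<in> f ` {..p}" using im by auto
    then show "m i \<le> p'" using assms unfolding delta_hom_def by auto
  next
    fix i i' assume a: "i \<le> i' \<and> i' \<le> k"
    show "m i \<le> m i'"
    proof (cases "i = i'")
      case False
      then have "i < i'" "i \<le> k" "i' \<le> k" using a by auto
      then show ?thesis using st by (meson less_imp_le)
    qed simp
  qed
  moreover have "inj_on m {..k}" using st unfolding inj_on_def
    by (metis atMost_iff linorder_neqE_nat order.strict_iff_not)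
  ultimately show ?thesis using e c by (intro exI[of _ k] exI[of _ e] exI[of _ m]) auto
qed

lemma slat_fact:
  assumes "fin_distrib_slat S j" "slat_hom_to_ord S j n h"
  shows "\<exists>k e m. slat_hom_to_ord S j k e \<and> e ` S = {..k} \<and> delta_hom k n m \<and> inj_on m {..k}
     \<and> h = compose S m e"
proof -
  have fin: "finite S" "S \<noteq> {}" and sl: "semilattice_on S j" using assms(1) unfolding fin_distrib_slat_def by auto
  obtain k :: nat and e m where e: "e \<in> extensional S" "e ` S = {..k}" and m: "m \<in> extensional {..k}"
    and st: "\<forall>i\<le>k. \<forall>i'\<le>k. i < i' \<longrightarrow> m i < m i'" and c: "\<forall>a\<in>S. m (e a) = h a"
    and im: "m ` {..k} = h ` S"
    using img_fact[OF fin, of h] by auto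
  have ek: "i \<in> S \<Longrightarrow> e i \<le> k" for i using e(2) by auto
  have injm: "inj_on m {..k}" using st unfolding inj_on_def
    by (metis atMost_iff linorder_neqE_nat order.strict_iff_not)
  have mmax: "m (max a b) = max (m a) (m b)" if "a \<le> k" "b \<le> k" for a b
  proof (cases "a \<le> b")
    case True
    then have "m a \<le> m b" using st[rule_format, of a b] that by (cases "a = b") auto
    then show ?thesis using True by (simp add: max_def)
  next
    case False
    then have "m b \<le> m a" using st[rule_format, of b a] that by auto
    then show ?thesis using False by (simp add: max_def)
  qed
  have "slat_hom_to_ord S j k e"
    unfolding slat_hom_to_ord_def
  proof (intro conjI ballI)
    show "e \<in> extensional S" by fact
    show "e x \<le> k" if "x \<in> S" for x using ek that .
    fix x y assume xy: "x \<in> S" "y \<in> S"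
    then have jS: "j x y \<in> S" using sl unfolding semilattice_on_def by auto
    have "m (e (j x y)) = h (j x y)" using c jS by auto
    also have "\<dots> = max (h x) (h y)" using assms(2) xy unfolding slat_hom_to_ord_def by auto
    also have "\<dots> = m (max (e x) (e y))" using mmax[of "e x" "e y"] ek xy c by auto
    finally show "e (j x y) = max (e x) (e y)" using injm ek jS xy unfolding inj_on_def
      by (metis atMost_iff max_def)
  qed
  moreover have "delta_hom k n m"
    unfolding delta_hom_def
  proof (intro conjI allI impI)
    show "m \<in> extensional {..k}" by fact
    fix i assume "i \<le> k"
    then have "m i \<in> h ` S" using im by auto
    then show "m i \<le> n" using assms(2) unfolding slat_hom_to_ord_def by auto
  next
    fix i i' assume a: "i \<le> i' \<and> i' \<le> k"
    show "m i \<le> m i'"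
    proof (cases "i = i'")
      case False
      then have "i < i'" "i \<le> k" "i' \<le> k" using a by auto
      then show ?thesis using st by (meson less_imp_le)
    qed simp
  qed
  moreover have "h = compose S m e"
  proof (rule extensionalityI)
    show "h \<in> extensional S" using assms(2) unfolding slat_hom_to_ord_def by auto
    show "compose S m e \<in> extensional S" by (simp add: compose_def)
    fix x assume "x \<in> S" then show "h x = compose S m e x" using c by (simp add: compose_def)
  qed
  ultimately show ?thesis using e injm by blast
qed



definition nd :: "(nat \<Rightarrow> 'a set) \<Rightarrow> (nat \<Rightarrow> nat \<Rightarrow> (nat \<Rightarrow> nat) \<Rightarrow> 'a \<Rightarrow> 'a) \<Rightarrow> nat \<Rightarrow> 'a \<Rightarrow> bool" where
  "nd X Xm p y \<longleftrightarrow> y \<in> X p \<and> (\<forall>q \<tau> z. delta_hom p q \<tau> \<and> \<tau> ` {..p} = {..q} \<and> z \<in> X q \<and> y = Xm p q \<tau> z \<longrightarrow> q = p)"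

lemma ps_closed: "delta_presheaf X Xm \<Longrightarrow> delta_hom m n f \<Longrightarrow> x \<in> X n \<Longrightarrow> Xm m n f x \<in> X m"
  unfolding delta_presheaf_def by blast

lemma ps_id: "delta_presheaf X Xm \<Longrightarrow> x \<in> X n \<Longrightarrow> Xm n n (\<lambda>i\<in>{..n}. i) x = x"
  unfolding delta_presheaf_def by blast

lemma ps_comp: "delta_presheaf X Xm \<Longrightarrow> delta_hom m n f \<Longrightarrow> delta_hom n p g \<Longrightarrow> x \<in> X p \<Longrightarrow>
   Xm m p (compose {..m} g f) x = Xm m n f (Xm n p g x)"
  unfolding delta_presheaf_def by blast

lemma surj_comp:
  assumes "f ` {..m} = {..n}" "g ` {..n} = {..p}"
  shows "(compose {..m} g f) ` {..m} = {..p}"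
proof -
  have "(compose {..m} g f) ` {..m} = g ` (f ` {..m})" unfolding compose_def by auto
  then show ?thesis using assms by simp
qed

lemma surj_le:
  assumes "f ` {..n} = {..(q::nat)}"
  shows "q \<le> n"
proof -
  have "card {..q} \<le> card {..n}" using assms card_image_le[of "{..n}" f] by simp
  then show ?thesis by simp
qed

lemma inj_le:
  assumes "inj_on f {..p}" "\<forall>i\<le>p. f i \<le> (p'::nat)"
  shows "p \<le> p'"
proof -
  have "card {..p} \<le> card {..p'}" using assms by (intro card_inj_on_le[of f]) auto
  then show ?thesis by simp
qed

lemma ez_ex:
  assumes ps: "delta_presheaf X Xm"
  shows "x \<in> X n \<Longrightarrow> \<exists>p \<sigma> y. delta_hom n p \<sigma> \<and> \<sigma> ` {..n} = {..p} \<and> nd X Xm p y \<and> x = Xm n p \<sigma> y"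
proof (induction n arbitrary: x rule: less_induct)
  case (less n)
  show ?case
  proof (cases "nd X Xm n x")
    case True
    have "(\<lambda>i\<in>{..n}. i) ` {..n} = {..n}" by auto
    moreover have "x = Xm n n (\<lambda>i\<in>{..n}. i) x" using ps_id[OF ps less.prems] by simp
    ultimately show ?thesis using True dh_id by blast
  next
    case False
    then obtain q \<tau> z where q: "delta_hom n q \<tau>" "\<tau> ` {..n} = {..q}" "z \<in> X q" "x = Xm n q \<tau> z" "q \<noteq> n"
      using less.prems unfolding nd_def by blast
    have "q < n" using surj_le[OF q(2)] q(5) by simp
    then obtain p \<sigma> y where py: "delta_hom q p \<sigma>" "\<sigma> ` {..q} = {..p}" "nd X Xm p y" "z = Xm q p \<sigma> y"
      using less.IH q(3) by blast
    have yX: "y \<in> X p" using py(3) unfolding nd_def by simp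
    have "x = Xm n p (compose {..n} \<sigma> \<tau>) y" using ps_comp[OF ps q(1) py(1) yX] q(4) py(4) by simp
    moreover have "delta_hom n p (compose {..n} \<sigma> \<tau>)" using dh_comp[OF q(1) py(1)] .
    moreover have "(compose {..n} \<sigma> \<tau>) ` {..n} = {..p}" using surj_comp[OF q(2) py(2)] .
    ultimately show ?thesis using py(3) by blast
  qed
qed

lemma ez_half:
  assumes ps: "delta_presheaf X Xm"
    and s: "delta_hom n p \<sigma>" "nd X Xm p y"
    and s': "delta_hom n p' \<sigma>'" "nd X Xm p' y'"
    and eq: "Xm n p \<sigma> y = Xm n p' \<sigma>' y'"
    and d: "delta_hom p n \<delta>" "\<forall>l\<le>p. \<sigma> (\<delta> l) = l"
  shows "p \<le> p' \<and> y = Xm p p' (compose {..p} \<sigma>' \<delta>) y' \<and> inj_on (compose {..p} \<sigma>' \<delta>) {..p}"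
proof -
  have yX: "y \<in> X p" using s(2) unfolding nd_def by simp
  have yX': "y' \<in> X p'" using s'(2) unfolding nd_def by simp
  have cid: "compose {..p} \<sigma> \<delta> = (\<lambda>i\<in>{..p}. i)"
    using d(2) by (intro dh_ext[OF dh_comp[OF d(1) s(1)] dh_id]) (simp add: compose_def)
  have "y = Xm p p (compose {..p} \<sigma> \<delta>) y" using cid ps_id[OF ps yX] by simp
  also have "\<dots> = Xm p n \<delta> (Xm n p \<sigma> y)" using ps_comp[OF ps d(1) s(1) yX] .
  also have "\<dots> = Xm p n \<delta> (Xm n p' \<sigma>' y')" using eq by simp
  also have "\<dots> = Xm p p' (compose {..p} \<sigma>' \<delta>) y'" using ps_comp[OF ps d(1) s'(1) yX'] by simp
  finally have y1: "y = Xm p p' (compose {..p} \<sigma>' \<delta>) y'" .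
  define f where "f = compose {..p} \<sigma>' \<delta>"
  have fh: "delta_hom p p' f" unfolding f_def using dh_comp[OF d(1) s'(1)] .
  obtain q \<tau> \<mu> where fa: "delta_hom p q \<tau>" "\<tau> ` {..p} = {..q}" "delta_hom q p' \<mu>" "inj_on \<mu> {..q}"
    "\<forall>i\<le>p. f i = \<mu> (\<tau> i)"
    using delta_fact[OF fh] by blast
  have "f = compose {..p} \<mu> \<tau>"
    using fa(5) by (intro dh_ext[OF fh dh_comp[OF fa(1) fa(3)]]) (simp add: compose_def)
  then have "y = Xm p q \<tau> (Xm q p' \<mu> y')" using y1 ps_comp[OF ps fa(1) fa(3) yX'] f_def by simp
  moreover have "Xm q p' \<mu> y' \<in> X q" using ps_closed[OF ps fa(3) yX'] .
  ultimately have qp: "q = p" using s(2) fa(1,2) unfolding nd_def by blast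
  have tid: "\<forall>i\<le>p. \<tau> i = i" using surj_self_id[of p \<tau>] fa(1,2) qp by simp
  have "\<forall>i\<le>p. f i = \<mu> i" using fa(5) tid by simp
  then have "inj_on f {..p}" using fa(4) qp inj_on_cong[of "{..p}" f \<mu>] by simp
  moreover have "\<forall>i\<le>p. f i \<le> p'" using fh unfolding delta_hom_def by simp
  ultimately show ?thesis using inj_le y1 f_def by blast
qed

lemma ez_uniq:
  assumes ps: "delta_presheaf X Xm"
    and s: "delta_hom n p \<sigma>" "\<sigma> ` {..n} = {..p}" "nd X Xm p y"
    and s': "delta_hom n p' \<sigma>'" "\<sigma>' ` {..n} = {..p'}" "nd X Xm p' y'"
    and eq: "Xm n p \<sigma> y = Xm n p' \<sigma>' y'"
  shows "p = p' \<and> \<sigma> = \<sigma>' \<and> y = y'"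
proof -
  have yX': "y' \<in> X p'" using s'(3) unfolding nd_def by simp
  obtain \<delta> where d: "delta_hom p n \<delta>" "\<forall>l\<le>p. \<sigma> (\<delta> l) = l"
    using section_ex[OF s(1,2), of 0] by auto
  obtain \<delta>' where d': "delta_hom p' n \<delta>'" "\<forall>l\<le>p'. \<sigma>' (\<delta>' l) = l"
    using section_ex[OF s'(1,2), of 0] by auto
  have h1: "p \<le> p' \<and> y = Xm p p' (compose {..p} \<sigma>' \<delta>) y' \<and> inj_on (compose {..p} \<sigma>' \<delta>) {..p}"
    using ez_half[OF ps s(1,3) s'(1,3) eq d] .
  have h2: "p' \<le> p" using ez_half[OF ps s'(1,3) s(1,3) eq[symmetric] d'] by simp
  have pp: "p = p'" using h1 h2 by simp
  have fh: "delta_hom p p (compose {..p} \<sigma>' \<delta>)" using dh_comp[OF d(1) s'(1)] pp by simp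
  have "\<forall>i\<le>p. compose {..p} \<sigma>' \<delta> i = i" using inj_self_id[OF fh] h1 by blast
  then have "compose {..p} \<sigma>' \<delta> = (\<lambda>i\<in>{..p}. i)" by (intro dh_ext[OF fh dh_id]) simp
  then have yy: "y = y'" using h1 ps_id[OF ps yX'] pp by simp
  have "\<sigma>' i = \<sigma> i" if i: "i \<le> n" for i
  proof -
    obtain \<delta>i where di: "delta_hom p n \<delta>i" "\<forall>l\<le>p. \<sigma> (\<delta>i l) = l" "\<delta>i (\<sigma> i) = i"
      using section_ex[OF s(1,2) i] by auto
    have hi: "inj_on (compose {..p} \<sigma>' \<delta>i) {..p}"
      using ez_half[OF ps s(1,3) s'(1,3) eq di(1,2)] by simp
    have fhi: "delta_hom p p (compose {..p} \<sigma>' \<delta>i)" using dh_comp[OF di(1) s'(1)] pp by simp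
    have "\<forall>l\<le>p. compose {..p} \<sigma>' \<delta>i l = l" using inj_self_id[OF fhi hi] .
    moreover have "\<sigma> i \<le> p" using s(1) i unfolding delta_hom_def by simp
    ultimately have "\<sigma>' (\<delta>i (\<sigma> i)) = \<sigma> i" by (simp add: compose_def)
    then show ?thesis using di(3) by simp
  qed
  then have "\<sigma> = \<sigma>'" using dh_ext[OF s(1) s'(1)] by simp
  then show ?thesis using pp yy by simp
qed



lemma gamma_ex:
  assumes e2: "e2 ` S = {..k2}" and e1: "e1 ` S = {..k1}"
    and m1: "delta_hom k1 n' m1" "inj_on m1 {..k1}"
    and m2: "delta_hom k2 n m2" and al: "delta_hom n n' \<alpha>"
    and c: "\<forall>s\<in>S. m1 (e1 s) = \<alpha> (m2 (e2 s))"
  shows "\<exists>\<gamma>. delta_hom k2 k1 \<gamma> \<and> \<gamma> ` {..k2} = {..k1} \<and> (\<forall>i\<le>k2. m1 (\<gamma> i) = \<alpha> (m2 i))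
     \<and> (\<forall>s\<in>S. \<gamma> (e2 s) = e1 s)"
proof -
  define \<gamma> where "\<gamma> = (\<lambda>i\<in>{..k2}. e1 (SOME s. s \<in> S \<and> e2 s = i))"
  have g1: "\<gamma> (e2 s) = e1 s" if s: "s \<in> S" for s
  proof -
    have le: "e2 s \<le> k2" using e2 s by auto
    define s' where "s' = (SOME t. t \<in> S \<and> e2 t = e2 s)"
    have s': "s' \<in> S \<and> e2 s' = e2 s" unfolding s'_def by (rule someI[of _ s]) (simp add: s)
    have "m1 (e1 s') = m1 (e1 s)" using c s s' by simp
    moreover have "e1 s' \<in> {..k1}" "e1 s \<in> {..k1}" using e1 s s' by auto
    ultimately have "e1 s' = e1 s" using m1(2) unfolding inj_on_def by blast
    then show ?thesis using le unfolding \<gamma>_def s'_def by simp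
  qed
  have g2: "\<exists>s\<in>S. e2 s = i" if "i \<le> k2" for i using e2 that by (metis atMost_iff imageE)
  have g3: "\<gamma> i \<le> k1 \<and> m1 (\<gamma> i) = \<alpha> (m2 i)" if i: "i \<le> k2" for i
  proof -
    obtain s where s: "s \<in> S" "e2 s = i" using g2 i by blast
    have "\<gamma> i = e1 s" using g1 s by blast
    then show ?thesis using e1 s c by auto
  qed
  have mono: "\<gamma> i \<le> \<gamma> i'" if ii: "i \<le> i'" "i' \<le> k2" for i i'
  proof (rule ccontr)
    assume "\<not> \<gamma> i \<le> \<gamma> i'"
    then have lt: "\<gamma> i' < \<gamma> i" by simp
    have "m1 (\<gamma> i') < m1 (\<gamma> i)" using dh_strict[OF m1 lt] g3 ii by simp
    moreover have "m2 i \<le> m2 i'" "m2 i' \<le> n" using m2 ii unfolding delta_hom_def by auto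
    then have "\<alpha> (m2 i) \<le> \<alpha> (m2 i')" using al unfolding delta_hom_def by blast
    ultimately show False using g3 ii by simp
  qed
  have "delta_hom k2 k1 \<gamma>" unfolding delta_hom_def using g3 mono by (auto simp: \<gamma>_def)
  moreover have "\<gamma> ` {..k2} = {..k1}"
  proof -
    have "\<gamma> ` {..k2} = \<gamma> ` (e2 ` S)" using e2 by simp
    also have "\<dots> = e1 ` S" using g1 by (auto simp: image_image)
    finally show ?thesis using e1 by simp
  qed
  ultimately show ?thesis using g1 g3 by blast
qed

definition NF :: "'c set \<Rightarrow> ('c \<Rightarrow> 'c \<Rightarrow> 'c) \<Rightarrow> (nat \<Rightarrow> 'a set)
   \<Rightarrow> (nat \<Rightarrow> nat \<Rightarrow> (nat \<Rightarrow> nat) \<Rightarrow> 'a \<Rightarrow> 'a)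
   \<Rightarrow> nat \<times> ('c \<Rightarrow> nat) \<times> 'a \<Rightarrow> nat \<times> ('c \<Rightarrow> nat) \<times> 'a \<Rightarrow> bool" where
  "NF S j X Xm a t \<longleftrightarrow> (\<exists>n h x k e m p \<sigma> y. a = (n, h, x) \<and> slat_hom_to_ord S j n h \<and> x \<in> X n
     \<and> slat_hom_to_ord S j k e \<and> e ` S = {..k} \<and> delta_hom k n m \<and> inj_on m {..k}
     \<and> h = compose S m e \<and> delta_hom k p \<sigma> \<and> \<sigma> ` {..k} = {..p} \<and> nd X Xm p y
     \<and> Xm k n m x = Xm k p \<sigma> y \<and> t = (p, compose S \<sigma> e, y))"

lemma NF_ex:
  assumes L: "fin_distrib_slat S j" and ps: "delta_presheaf X Xm" and a: "a \<in> lan_elems S j X"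
  shows "\<exists>t. NF S j X Xm a t"
proof -
  obtain n h x where a': "a = (n, h, x)" "slat_hom_to_ord S j n h" "x \<in> X n"
    using a unfolding lan_elems_def by blast
  obtain k e m where f: "slat_hom_to_ord S j k e" "e ` S = {..k}" "delta_hom k n m" "inj_on m {..k}"
     "h = compose S m e"
    using slat_fact[OF L a'(2)] by blast
  have "Xm k n m x \<in> X k" using ps_closed[OF ps f(3) a'(3)] .
  then obtain p \<sigma> y where "delta_hom k p \<sigma>" "\<sigma> ` {..k} = {..p}" "nd X Xm p y" "Xm k n m x = Xm k p \<sigma> y"
    using ez_ex[OF ps] by blast
  then show ?thesis unfolding NF_def using a' f by blast
qed

lemma lan_equiv_sym:
  assumes "lan_equiv S j X Xm a b"
  shows "lan_equiv S j X Xm b a"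
proof -
  let ?R = "sup (lan_gen S j X Xm) (lan_gen S j X Xm)\<inverse>\<inverse>"
  have "?R\<^sup>*\<^sup>* a b" using assms unfolding lan_equiv_def .
  then have "?R\<^sup>*\<^sup>* b a"
  proof (induction rule: rtranclp_induct)
    case base then show ?case by simp
  next
    case (step y z)
    have "?R z y" using step(2) by auto
    then show ?case using step(3) by (rule converse_rtranclp_into_rtranclp)
  qed
  then show ?thesis unfolding lan_equiv_def .
qed

lemma lan_equiv_trans:
  "lan_equiv S j X Xm a b \<Longrightarrow> lan_equiv S j X Xm b c \<Longrightarrow> lan_equiv S j X Xm a c"
  unfolding lan_equiv_def by (rule rtranclp_trans)

lemma lan_gen_equiv: "lan_gen S j X Xm a b \<Longrightarrow> lan_equiv S j X Xm a b"
  unfolding lan_equiv_def by (rule r_into_rtranclp) simp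

lemma NF_equiv:
  assumes "NF S j X Xm a t"
  shows "lan_equiv S j X Xm a t"
proof -
  obtain n h x k e m p \<sigma> y where N: "a = (n, h, x)" "slat_hom_to_ord S j n h" "x \<in> X n"
     "slat_hom_to_ord S j k e" "e ` S = {..k}" "delta_hom k n m" "inj_on m {..k}"
     "h = compose S m e" "delta_hom k p \<sigma>" "\<sigma> ` {..k} = {..p}" "nd X Xm p y"
     "Xm k n m x = Xm k p \<sigma> y" "t = (p, compose S \<sigma> e, y)"
    using assms unfolding NF_def by blast
  have yX: "y \<in> X p" using N(11) unfolding nd_def by simp
  have "lan_gen S j X Xm a (k, e, Xm k n m x)"
    unfolding lan_gen_def using N by blast
  moreover have "lan_gen S j X Xm t (k, e, Xm k p \<sigma> y)"
    unfolding lan_gen_def using N yX by blast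
  ultimately show ?thesis using N(12) lan_gen_equiv lan_equiv_sym lan_equiv_trans by metis
qed



lemma NF_gen:
  assumes ps: "delta_presheaf X Xm" and g: "lan_gen S j X Xm a b"
    and Na: "NF S j X Xm a t" and Nb: "NF S j X Xm b t'"
  shows "t = t'"
proof -
  obtain m0 n h \<alpha> x where G: "slat_hom_to_ord S j m0 h" "delta_hom m0 n \<alpha>" "x \<in> X n"
    "a = (n, compose S \<alpha> h, x)" "b = (m0, h, Xm m0 n \<alpha> x)"
    using g unfolding lan_gen_def by blast
  obtain n1 h1 x1 k1 e1 m1 p1 \<sigma>1 y1 where N1: "a = (n1, h1, x1)" "slat_hom_to_ord S j n1 h1" "x1 \<in> X n1"
     "slat_hom_to_ord S j k1 e1" "e1 ` S = {..k1}" "delta_hom k1 n1 m1" "inj_on m1 {..k1}"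
     "h1 = compose S m1 e1" "delta_hom k1 p1 \<sigma>1" "\<sigma>1 ` {..k1} = {..p1}" "nd X Xm p1 y1"
     "Xm k1 n1 m1 x1 = Xm k1 p1 \<sigma>1 y1" "t = (p1, compose S \<sigma>1 e1, y1)"
    using Na unfolding NF_def by blast
  obtain n2 h2 x2 k2 e2 m2 p2 \<sigma>2 y2 where N2: "b = (n2, h2, x2)" "slat_hom_to_ord S j n2 h2" "x2 \<in> X n2"
     "slat_hom_to_ord S j k2 e2" "e2 ` S = {..k2}" "delta_hom k2 n2 m2" "inj_on m2 {..k2}"
     "h2 = compose S m2 e2" "delta_hom k2 p2 \<sigma>2" "\<sigma>2 ` {..k2} = {..p2}" "nd X Xm p2 y2"
     "Xm k2 n2 m2 x2 = Xm k2 p2 \<sigma>2 y2" "t' = (p2, compose S \<sigma>2 e2, y2)"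
    using Nb unfolding NF_def by blast
  have id1: "n1 = n" "h1 = compose S \<alpha> h" "x1 = x" using G(4) N1(1) by auto
  have id2: "n2 = m0" "h2 = h" "x2 = Xm m0 n \<alpha> x" using G(5) N2(1) by auto
  have c: "\<forall>s\<in>S. m1 (e1 s) = \<alpha> (m2 (e2 s))"
  proof
    fix s assume s: "s \<in> S"
    have "m1 (e1 s) = compose S m1 e1 s" using s by (simp add: compose_def)
    also have "\<dots> = compose S \<alpha> h s" using N1(8) id1 by simp
    also have "\<dots> = \<alpha> (h s)" using s by (simp add: compose_def)
    also have "h s = compose S m2 e2 s" using N2(8) id2 by simp
    also have "\<dots> = m2 (e2 s)" using s by (simp add: compose_def)
    finally show "m1 (e1 s) = \<alpha> (m2 (e2 s))" .
  qed
  have m1h: "delta_hom k1 n m1" using N1(6) id1 by simp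
  have m2h: "delta_hom k2 m0 m2" using N2(6) id2 by simp
  obtain \<gamma> where gm: "delta_hom k2 k1 \<gamma>" "\<gamma> ` {..k2} = {..k1}" "\<forall>i\<le>k2. m1 (\<gamma> i) = \<alpha> (m2 i)"
     "\<forall>s\<in>S. \<gamma> (e2 s) = e1 s"
    using gamma_ex[OF N2(5) N1(5) m1h N1(7) m2h G(2) c] by blast
  have cc: "compose {..k2} \<alpha> m2 = compose {..k2} m1 \<gamma>"
    using gm(3) by (intro dh_ext[OF dh_comp[OF m2h G(2)] dh_comp[OF gm(1) m1h]]) (simp add: compose_def)
  have y1X: "y1 \<in> X p1" using N1(11) unfolding nd_def by simp
  have "Xm k2 p2 \<sigma>2 y2 = Xm k2 m0 m2 (Xm m0 n \<alpha> x)" using N2(12) id2 by simp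
  also have "\<dots> = Xm k2 n (compose {..k2} \<alpha> m2) x" using ps_comp[OF ps m2h G(2) G(3)] by simp
  also have "\<dots> = Xm k2 n (compose {..k2} m1 \<gamma>) x" using cc by simp
  also have "\<dots> = Xm k2 k1 \<gamma> (Xm k1 n m1 x)" using ps_comp[OF ps gm(1) m1h G(3)] .
  also have "\<dots> = Xm k2 k1 \<gamma> (Xm k1 p1 \<sigma>1 y1)" using N1(12) id1 by simp
  also have "\<dots> = Xm k2 p1 (compose {..k2} \<sigma>1 \<gamma>) y1" using ps_comp[OF ps gm(1) N1(9) y1X] by simp
  finally have eq: "Xm k2 p1 (compose {..k2} \<sigma>1 \<gamma>) y1 = Xm k2 p2 \<sigma>2 y2" by simp
  have U: "p1 = p2 \<and> compose {..k2} \<sigma>1 \<gamma> = \<sigma>2 \<and> y1 = y2"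
  proof (rule ez_uniq[OF ps])
    show "delta_hom k2 p1 (compose {..k2} \<sigma>1 \<gamma>)" using dh_comp[OF gm(1) N1(9)] .
    show "compose {..k2} \<sigma>1 \<gamma> ` {..k2} = {..p1}" using surj_comp[OF gm(2) N1(10)] .
    show "nd X Xm p1 y1" by fact
    show "delta_hom k2 p2 \<sigma>2" by fact
    show "\<sigma>2 ` {..k2} = {..p2}" by fact
    show "nd X Xm p2 y2" by fact
    show "Xm k2 p1 (compose {..k2} \<sigma>1 \<gamma>) y1 = Xm k2 p2 \<sigma>2 y2" by fact
  qed
  have "compose S \<sigma>2 e2 = compose S \<sigma>1 e1"
  proof
    fix s show "compose S \<sigma>2 e2 s = compose S \<sigma>1 e1 s"
    proof (cases "s \<in> S")
      case True
      then have "e2 s \<le> k2" using N2(5) by auto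
      have s2: "\<sigma>2 = compose {..k2} \<sigma>1 \<gamma>" using U by simp
      have "\<sigma>2 (e2 s) = \<sigma>1 (\<gamma> (e2 s))" unfolding s2 using \<open>e2 s \<le> k2\<close> by (simp add: compose_def)
      then show ?thesis using True gm(4) by (simp add: compose_def)
    qed (simp add: compose_def)
  qed
  moreover have "p1 = p2" "y1 = y2" using U by simp_all
  ultimately show ?thesis using N1(13) N2(13) by simp
qed

lemma gen_elems:
  assumes ps: "delta_presheaf X Xm" and cl: "\<forall>x\<in>S. \<forall>y\<in>S. j x y \<in> S"
    and g: "lan_gen S j X Xm a b"
  shows "a \<in> lan_elems S j X \<and> b \<in> lan_elems S j X"
proof -
  obtain m0 n h \<alpha> x where G: "slat_hom_to_ord S j m0 h" "delta_hom m0 n \<alpha>" "x \<in> X n"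
    "a = (n, compose S \<alpha> h, x)" "b = (m0, h, Xm m0 n \<alpha> x)"
    using g unfolding lan_gen_def by blast
  have "slat_hom_to_ord S j n (compose S \<alpha> h)" using sh_comp[OF G(1) G(2) cl] .
  moreover have "Xm m0 n \<alpha> x \<in> X m0" using ps_closed[OF ps G(2,3)] .
  ultimately show ?thesis using G unfolding lan_elems_def by simp
qed

lemma NF_unique:
  assumes ps: "delta_presheaf X Xm" and Na: "NF S j X Xm a t" and Nb: "NF S j X Xm a t'"
  shows "t = t'"
proof -
  obtain n h x where a: "a = (n, h, x)" "slat_hom_to_ord S j n h" "x \<in> X n"
    using Na unfolding NF_def by blast
  have "compose S (\<lambda>i\<in>{..n}. i) h = h"
  proof
    fix s show "compose S (\<lambda>i\<in>{..n}. i) h s = h s"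
      using a(2) unfolding slat_hom_to_ord_def compose_def extensional_def by auto
  qed
  then have idc: "compose S (\<lambda>i\<in>{..n}. i) h = h" .
  have px: "Xm n n (\<lambda>i\<in>{..n}. i) x = x" using ps_id[OF ps a(3)] .
  have "lan_gen S j X Xm a a" unfolding lan_gen_def
    apply (rule exI[where x=n])
    apply (rule exI[where x=n])
    apply (rule exI[where x=h])
    apply (rule exI[where x="\<lambda>i\<in>{..n}. i"])
    apply (rule exI[where x=x])
    using a dh_id idc px by simp
  then show ?thesis using NF_gen[OF ps _ Na Nb] by simp
qed

lemma chain:
  assumes L: "fin_distrib_slat S j" and ps: "delta_presheaf X Xm"
    and e: "lan_equiv S j X Xm a b" and a: "a \<in> lan_elems S j X"
  shows "b \<in> lan_elems S j X \<and> (\<forall>t t'. NF S j X Xm a t \<longrightarrow> NF S j X Xm b t' \<longrightarrow> t = t')"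
proof -
  have cl: "\<forall>x\<in>S. \<forall>y\<in>S. j x y \<in> S" using L unfolding fin_distrib_slat_def semilattice_on_def by simp
  let ?R = "sup (lan_gen S j X Xm) (lan_gen S j X Xm)\<inverse>\<inverse>"
  have "?R\<^sup>*\<^sup>* a b" using e unfolding lan_equiv_def .
  then show ?thesis
  proof (induction rule: rtranclp_induct)
    case base then show ?case using a NF_unique[OF ps] by blast
  next
    case (step y z)
    have yz: "lan_gen S j X Xm y z \<or> lan_gen S j X Xm z y" using step(2) by auto
    then have zE: "z \<in> lan_elems S j X" using gen_elems[OF ps cl] by blast
    show ?case
    proof (intro conjI allI impI)
      show "z \<in> lan_elems S j X" by fact
      fix t t' assume Na: "NF S j X Xm a t" and Nz: "NF S j X Xm z t'"
      obtain t'' where Ny: "NF S j X Xm y t''" using NF_ex[OF L ps] step(3) by blast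
      have "t = t''" using step(3) Na Ny by blast
      moreover have "t'' = t'" using yz
      proof
        assume "lan_gen S j X Xm y z" then show ?thesis using NF_gen[OF ps _ Ny Nz] by simp
      next
        assume "lan_gen S j X Xm z y" then show ?thesis using NF_gen[OF ps _ Nz Ny] by simp
      qed
      ultimately show "t = t'" by simp
    qed
  qed
qed



lemma nd_pres:
  assumes psX: "delta_presheaf X Xm" and psY: "delta_presheaf Y Ym"
    and mo: "delta_mono X Xm Y Ym \<phi>" and ndy: "nd X Xm p y"
  shows "nd Y Ym p (\<phi> p y)"
proof -
  have into: "\<And>n x. x \<in> X n \<Longrightarrow> \<phi> n x \<in> Y n" using mo unfolding delta_mono_def delta_nat_trans_def by blast
  have nat: "\<And>m n f x. delta_hom m n f \<Longrightarrow> x \<in> X n \<Longrightarrow> \<phi> m (Xm m n f x) = Ym m n f (\<phi> n x)"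
    using mo unfolding delta_mono_def delta_nat_trans_def by blast
  have inj: "\<And>n. inj_on (\<phi> n) (X n)" using mo unfolding delta_mono_def by blast
  have yX: "y \<in> X p" using ndy unfolding nd_def by simp
  have "q = p" if q: "delta_hom p q \<tau>" "\<tau> ` {..p} = {..q}" "z \<in> Y q" "\<phi> p y = Ym p q \<tau> z" for q \<tau> z
  proof -
    obtain \<delta> where d: "delta_hom q p \<delta>" "\<forall>l\<le>q. \<tau> (\<delta> l) = l"
      using section_ex[OF q(1,2), of 0] by auto
    have cid: "compose {..q} \<tau> \<delta> = (\<lambda>i\<in>{..q}. i)"
      using d(2) by (intro dh_ext[OF dh_comp[OF d(1) q(1)] dh_id]) (simp add: compose_def)
    have "z = Ym q q (compose {..q} \<tau> \<delta>) z" using cid ps_id[OF psY q(3)] by simp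
    also have "\<dots> = Ym q p \<delta> (Ym p q \<tau> z)" using ps_comp[OF psY d(1) q(1) q(3)] .
    also have "\<dots> = Ym q p \<delta> (\<phi> p y)" using q(4) by simp
    also have "\<dots> = \<phi> q (Xm q p \<delta> y)" using nat[OF d(1) yX] by simp
    finally have z: "z = \<phi> q (Xm q p \<delta> y)" .
    have wX: "Xm q p \<delta> y \<in> X q" using ps_closed[OF psX d(1) yX] .
    have "\<phi> p y = \<phi> p (Xm p q \<tau> (Xm q p \<delta> y))" using q(4) z nat[OF q(1) wX] by simp
    moreover have "Xm p q \<tau> (Xm q p \<delta> y) \<in> X p" using ps_closed[OF psX q(1) wX] .
    ultimately have "y = Xm p q \<tau> (Xm q p \<delta> y)" using inj[of p] yX unfolding inj_on_def by blast
    then show "q = p" using ndy q(1,2) wX unfolding nd_def by blast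
  qed
  then show ?thesis unfolding nd_def using into[OF yX] by blast
qed

lemma NF_transfer:
  assumes psX: "delta_presheaf X Xm" and psY: "delta_presheaf Y Ym"
    and mo: "delta_mono X Xm Y Ym \<phi>" and N: "NF S j X Xm (n, h, x) (p, g, y)"
  shows "NF S j Y Ym (n, h, \<phi> n x) (p, g, \<phi> p y)"
proof -
  have into: "\<And>n x. x \<in> X n \<Longrightarrow> \<phi> n x \<in> Y n" using mo unfolding delta_mono_def delta_nat_trans_def by blast
  have nat: "\<And>m n f x. delta_hom m n f \<Longrightarrow> x \<in> X n \<Longrightarrow> \<phi> m (Xm m n f x) = Ym m n f (\<phi> n x)"
    using mo unfolding delta_mono_def delta_nat_trans_def by blast
  obtain k e m \<sigma> where N1: "slat_hom_to_ord S j n h" "x \<in> X n"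
     "slat_hom_to_ord S j k e" "e ` S = {..k}" "delta_hom k n m" "inj_on m {..k}"
     "h = compose S m e" "delta_hom k p \<sigma>" "\<sigma> ` {..k} = {..p}" "nd X Xm p y"
     "Xm k n m x = Xm k p \<sigma> y" "g = compose S \<sigma> e"
    using N unfolding NF_def by auto
  have yX: "y \<in> X p" using N1(10) unfolding nd_def by simp
  have "Ym k n m (\<phi> n x) = Ym k p \<sigma> (\<phi> p y)"
    using nat[OF N1(5) N1(2)] nat[OF N1(8) yX] N1(11) by simp
  moreover have "nd Y Ym p (\<phi> p y)" using nd_pres[OF psX psY mo N1(10)] .
  moreover have "\<phi> n x \<in> Y n" using into[OF N1(2)] .
  ultimately show ?thesis unfolding NF_def using N1 by blast
qed

theorem mainTheorem9:
  fixes X :: "nat \<Rightarrow> 'a set" and Xm :: "nat \<Rightarrow> nat \<Rightarrow> (nat \<Rightarrow> nat) \<Rightarrow> 'a \<Rightarrow> 'a"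
    and Y :: "nat \<Rightarrow> 'b set" and Ym :: "nat \<Rightarrow> nat \<Rightarrow> (nat \<Rightarrow> nat) \<Rightarrow> 'b \<Rightarrow> 'b"
    and \<phi> :: "nat \<Rightarrow> 'a \<Rightarrow> 'b"
    and S :: "'c set" and j :: "'c \<Rightarrow> 'c \<Rightarrow> 'c"
  assumes "delta_presheaf X Xm" and "delta_presheaf Y Ym"
    and "delta_mono X Xm Y Ym \<phi>"
    and "fin_distrib_slat S j"
  shows "lan_component_inj S j X Xm Y Ym \<phi>"
proof -
  note psX = assms(1) and psY = assms(2) and mo = assms(3) and L = assms(4)
  have into: "\<And>n x. x \<in> X n \<Longrightarrow> \<phi> n x \<in> Y n" using mo unfolding delta_mono_def delta_nat_trans_def by blast
  have inj: "\<And>n. inj_on (\<phi> n) (X n)" using mo unfolding delta_mono_def by blast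
  have key: "lan_equiv S j X Xm (n, h, x) (n', h', x')"
    if a: "(n, h, x) \<in> lan_elems S j X" and b: "(n', h', x') \<in> lan_elems S j X"
      and e: "lan_equiv S j Y Ym (n, h, \<phi> n x) (n', h', \<phi> n' x')" for n h x n' h' x'
  proof -
    obtain t where Na: "NF S j X Xm (n, h, x) t" using NF_ex[OF L psX a] by blast
    obtain t' where Nb: "NF S j X Xm (n', h', x') t'" using NF_ex[OF L psX b] by blast
    obtain p g y where t: "t = (p, g, y)" by (cases t) auto
    obtain p' g' y' where t': "t' = (p', g', y')" by (cases t') auto
    have NYa: "NF S j Y Ym (n, h, \<phi> n x) (p, g, \<phi> p y)" using NF_transfer[OF psX psY mo] Na t by simp
    have NYb: "NF S j Y Ym (n', h', \<phi> n' x') (p', g', \<phi> p' y')" using NF_transfer[OF psX psY mo] Nb t' by simp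
    have aY: "(n, h, \<phi> n x) \<in> lan_elems S j Y" using a into unfolding lan_elems_def by simp
    have E: "(p, g, \<phi> p y) = (p', g', \<phi> p' y')" using chain[OF L psY e aY] NYa NYb by blast
    note E' = E[unfolded prod.inject]
    have p1: "p = p'" using E' by (rule conjunct1)
    have p2: "g = g'" using E' by blast
    have p3: "\<phi> p y = \<phi> p' y'" using E' by blast
    have pp: "p = p'" "g = g'" "\<phi> p y = \<phi> p y'" using p1 p2 p3 unfolding p1[symmetric] by simp_all
    have "y \<in> X p" "y' \<in> X p"
      using Na Nb t t' pp(1) unfolding NF_def nd_def by auto
    then have "y = y'" using inj[of p] pp(3) unfolding inj_on_def by blast
    then have "t = t'" using t t' pp by simp
    then show ?thesis using NF_equiv[OF Na] NF_equiv[OF Nb] lan_equiv_sym lan_equiv_trans by metis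
  qed
  show ?thesis unfolding lan_component_inj_def using key by blast
qed

end
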